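(* Let $q$ be an odd prime power, $d$ a positive integer, and $\varphi_d$ the coloring defined below. Let $\{s_1,\dots,s_t\} \subseteq (\mathbb{F}_q^* )^d$ be a set of $t$ linearly independent vectors and let $a,b \in (\mathbb{F}_q^* )^d$ (with $a\neq b$, $a\ne s_i$, $b\ne s_i$ for all $i$) be such that there are colors $\alpha,\beta\in C_d$ with $\varphi_d(a,b) = \varphi_d(a,s_i) = \alpha$ and $\varphi_d(b,s_i) = \beta$ for each $1 \le i \le t$. Then $s_1,\dots,s_t,b$ are linearly independent.
   Context: $\mathbb{F}_q^*$ is the set of nonzero elements of $\mathbb{F}_q$, endowed with an arbitrary fixed linear order; $(\mathbb{F}_q^* )^d$ is ordered lexicographically with respect to it. Let $C_d = \mathrm{DOT} \sqcup \mathrm{ZERO}\sqcup\mathrm{UP}\sqcup\mathrm{DOWN}$, where $\mathrm{DOT} = \mathbb{F}_q^*$ and ZERO, UP, DOWN are three disjoint copies of $\{1,\dots,d\}\times \mathbb{F}_q$. For distinct $x<y$ in $(\mathbb{F}_q^* )^d$, let $i$ be the first coordinate where $x=(x_1,\dots,x_d)$ and $y$ differ, and let $x\cdot y$ be the standard dot product; define $\varphi_d(x,y)=\varphi_d(y,x)$ to be $(i,x_i+y_i)$ in ZERO if $x\cdot y=0$; $(i,x_i+y_i)$ in UP if $x\cdot y\ne 0$ and $x\cdot y=x\cdot x$; $(i,x_i+y_i)$ in DOWN if $x\cdot y\notin\{0,x\cdot x\}$ and $x\cdot y=y\cdot y$; and $x\cdot y\in \mathrm{DOT}$ otherwise. 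*)

theory Defs
  imports "HOL-Analysis.Analysis"
begin

text \<open>Colours: DOT = F_q^*, and ZERO, UP, DOWN are copies of {1..d} x F_q.
  The coordinate set {1..d} is represented by the finite well-ordered index type 'n
  (with d = CARD('n)); its order plays the role of the order 1 < 2 < ... < d.\<close>
datatype ('n, 'a) color = DOT 'a | ZERO 'n 'a | UP 'n 'a | DOWN 'n 'a

definition dotp :: "('a::field ^ 'n::finite) \<Rightarrow> 'a ^ 'n \<Rightarrow> 'a" where
  "dotp x y = (\<Sum>i\<in>UNIV. x $ i * y $ i)"

definition nzvec :: "('a::field ^ 'n) \<Rightarrow> bool" where
  "nzvec x \<longleftrightarrow> (\<forall>i. x $ i \<noteq> 0)"

definition firstdiff :: "('a ^ 'n::{finite,wellorder}) \<Rightarrow> ('a ^ 'n::{finite,wellorder}) \<Rightarrow> 'n::{finite,wellorder}" where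
  "firstdiff x y = (LEAST i. x $ i \<noteq> y $ i)"

definition lexless :: "'a rel \<Rightarrow> ('a ^ 'n::{finite,wellorder}) \<Rightarrow> ('a ^ 'n::{finite,wellorder}) \<Rightarrow> bool" where
  "lexless ord x y \<longleftrightarrow> x \<noteq> y \<and> (x $ firstdiff x y, y $ firstdiff x y) \<in> ord"

definition phi0 :: "('a::field ^ 'n::{finite,wellorder}) \<Rightarrow> ('a ^ 'n::{finite,wellorder}) \<Rightarrow> ('n::{finite,wellorder}, 'a) color" where
  "phi0 x y = (let i = firstdiff x y; s = x $ i + y $ i in
     if dotp x y = 0 then ZERO i s
     else if dotp x y = dotp x x then UP i s
     else if dotp x y = dotp y y then DOWN i s
     else DOT (dotp x y))"

text \<open>The symmetric colouring phi_d (only meaningful for distinct x, y).\<close>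
definition phi :: "'a rel \<Rightarrow> ('a::field ^ 'n::{finite,wellorder}) \<Rightarrow> ('a ^ 'n::{finite,wellorder}) \<Rightarrow> ('n::{finite,wellorder}, 'a) color" where
  "phi ord x y = (if lexless ord x y then phi0 x y else phi0 y x)"

end

theory Submission
  imports Defs
begin

fun cidx :: "('n, 'a) color \<Rightarrow> 'n" where
  "cidx (ZERO i c) = i" | "cidx (UP i c) = i" | "cidx (DOWN i c) = i" | "cidx (DOT c) = undefined"

fun cval :: "('n, 'a) color \<Rightarrow> 'a" where
  "cval (ZERO i c) = c" | "cval (UP i c) = c" | "cval (DOWN i c) = c" | "cval (DOT c) = c"

lemma firstdiff_sym: "firstdiff x y = firstdiff y x"
  unfolding firstdiff_def by (metis)

lemma dotp_sym: "dotp x y = dotp y x"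
  unfolding dotp_def by (simp add: mult.commute)

lemma firstdiff_prop:
  assumes "x \<noteq> y"
  shows "x $ firstdiff x y \<noteq> y $ firstdiff x y"
proof -
  from assms obtain k where "x $ k \<noteq> y $ k" by (metis vec_eq_iff)
  then show ?thesis unfolding firstdiff_def by (rule LeastI)
qed

lemma phi_DOT:
  assumes "phi ord x y = DOT m"
  shows "dotp x y = m \<and> m \<noteq> 0 \<and> m \<noteq> dotp x x \<and> m \<noteq> dotp y y"
  using assms unfolding phi_def phi0_def Let_def
  by (auto split: if_splits simp: dotp_sym)

lemma phi_coord:
  assumes "\<forall>m. phi ord x y \<noteq> DOT m"
  shows "cidx (phi ord x y) = firstdiff x y \<and>
         cval (phi ord x y) = x $ firstdiff x y + y $ firstdiff x y"
  using assms unfolding phi_def phi0_def Let_def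
  by (auto split: if_splits simp: firstdiff_sym add.commute)

lemma dotp_sum: "dotp x (\<Sum>v\<in>T. c v *s v) = (\<Sum>v\<in>T. c v * dotp x v)"
proof -
  have "dotp x (\<Sum>v\<in>T. c v *s v) = (\<Sum>i\<in>UNIV. \<Sum>v\<in>T. x $ i * (c v * v $ i))"
    unfolding dotp_def by (simp add: sum_distrib_left)
  also have "\<dots> = (\<Sum>v\<in>T. \<Sum>i\<in>UNIV. c v * (x $ i * v $ i))"
    by (subst sum.swap) (simp add: algebra_simps)
  also have "\<dots> = (\<Sum>v\<in>T. c v * dotp x v)"
    unfolding dotp_def by (simp add: sum_distrib_left)
  finally show ?thesis .
qed

theorem lemma3p3:
  fixes ord :: "'a::{field,finite} rel"
    and S :: "('a ^ 'n::{finite,wellorder}) set"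
    and a b :: "'a ^ 'n::{finite,wellorder}"
  assumes q_odd: "odd CARD('a)"
    and ord_lin: "linear_order_on (UNIV - {0}) ord"
    and S_nz: "\<forall>s\<in>S. nzvec s"
    and a_nz: "nzvec a" and b_nz: "nzvec b"
    and S_indep: "vec.independent S"
    and ab: "a \<noteq> b" and aS: "a \<notin> S" and bS: "b \<notin> S"
    and colors: "\<exists>\<alpha> \<beta>. phi ord a b = \<alpha> \<and> (\<forall>s\<in>S. phi ord a s = \<alpha> \<and> phi ord b s = \<beta>)"
  shows "vec.independent (insert b S)"
proof -
  obtain \<beta> where hA: "\<forall>s\<in>S. phi ord a s = phi ord a b" and hB: "\<forall>s\<in>S. phi ord b s = \<beta>"
    using colors by metis
  have "b \<notin> vec.span S"
  proof
    assume "b \<in> vec.span S"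
    then obtain T c where fT: "finite T" and TS: "T \<subseteq> S" and bT: "b = (\<Sum>v\<in>T. c v *s v)"
      unfolding vec.span_explicit by blast
    have comp: "b $ k = (\<Sum>v\<in>T. c v * v $ k)" for k
      using bT by simp
    have dsum: "dotp x b = (\<Sum>v\<in>T. c v * dotp x v)" for x
      using bT dotp_sum by metis
    have Sc: "(\<Sum>v\<in>T. c v) = 1"
    proof (cases "\<exists>m. phi ord a b = DOT m")
      case True
      then obtain m where m: "phi ord a b = DOT m" by blast
      have "dotp a v = m" if "v \<in> T" for v using phi_DOT[of ord a v m] hA m TS that by auto
      then have "dotp a b = (\<Sum>v\<in>T. c v) * m"
        using dsum[of a] by (simp add: sum_distrib_right)
      moreover have "dotp a b = m" "m \<noteq> 0" using phi_DOT[OF m] by auto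
      ultimately show ?thesis by simp
    next
      case False
      define i where "i = firstdiff a b"
      have ci: "cidx (phi ord a b) = i" "cval (phi ord a b) = a $ i + b $ i"
        using phi_coord[of ord a b] False i_def by auto
      have "v $ i = b $ i" if "v \<in> T" for v
      proof -
        have "phi ord a v = phi ord a b" using hA that TS by auto
        then show ?thesis using phi_coord[of ord a v] False ci by auto
      qed
      then have "(\<Sum>v\<in>T. c v * v $ i) = (\<Sum>v\<in>T. c v * b $ i)"
        by (intro sum.cong) auto
      then have "b $ i = (\<Sum>v\<in>T. c v) * b $ i"
        unfolding comp[of i] by (simp add: sum_distrib_right)
      moreover have "b $ i \<noteq> 0" using b_nz unfolding nzvec_def by auto
      ultimately show ?thesis by simp
    qed
    have "T \<noteq> {}"
    proof
      assume "T = {}"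
      then have "b $ undefined = 0" using comp by simp
      then show False using b_nz unfolding nzvec_def by auto
    qed
    then obtain s0 where s0: "s0 \<in> T" by blast
    have bs0: "b \<noteq> s0" using s0 TS bS by auto
    show False
    proof (cases "\<exists>m. \<beta> = DOT m")
      case True
      then obtain m where m: "\<beta> = DOT m" by blast
      have "dotp b v = m" if "v \<in> T" for v using phi_DOT[of ord b v m] hB m TS that by auto
      then have "dotp b b = (\<Sum>v\<in>T. c v) * m"
        using dsum[of b] by (simp add: sum_distrib_right)
      then have "dotp b b = m" using Sc by simp
      moreover have "m \<noteq> dotp b b" using phi_DOT[of ord b s0 m] hB m TS s0 by auto
      ultimately show False by simp
    next
      case False
      define j where "j = firstdiff b s0"
      have cj: "cidx \<beta> = j" "cval \<beta> = b $ j + s0 $ j"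
        using phi_coord[of ord b s0] False j_def hB s0 TS by auto
      have "v $ j = s0 $ j" if "v \<in> T" for v
      proof -
        have "phi ord b v = \<beta>" using hB that TS by auto
        then show ?thesis using phi_coord[of ord b v] False cj by auto
      qed
      then have "(\<Sum>v\<in>T. c v * v $ j) = (\<Sum>v\<in>T. c v * s0 $ j)"
        by (intro sum.cong) auto
      then have "b $ j = (\<Sum>v\<in>T. c v) * s0 $ j"
        unfolding comp[of j] by (simp add: sum_distrib_right)
      then have "b $ j = s0 $ j" using Sc by simp
      moreover have "b $ j \<noteq> s0 $ j" using firstdiff_prop[OF bs0] j_def by simp
      ultimately show False by simp
    qed
  qed
  then show ?thesis using S_indep bS by (rule_tac vec.independent_insertI) auto
qed

end
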